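(* Let $H\in\mathbb{R}^{\ell\times\ell}$ be symmetric, $0\ne g_0\in\mathbb{R}^\ell$, $\gamma>0$, and consider pLGopt and pQEPmin defined in the context. (1) Let $(\lambda_*,y_* )$ be a minimizer of pLGopt. Then either $\lambda_*<\lambda_{\min}(H)$ or $\lambda_*=\lambda_{\min}(H)$, and there exists $w_*$ such that $(\lambda_*,w_* )$ is a minimizer of pQEPmin; specifically $w_*=(H-\lambda_*I)^{-1}y_*$ if $\lambda_*<\lambda_{\min}(H)$, and $w_*$ is a corresponding eigenvector of $H$ if $\lambda_*=\lambda_{\min}(H)$. (2) Conversely, if $(\lambda_*,w_* )$ is a minimizer of pQEPmin, then there exists $y_*$ such that $(\lambda_*,y_* )$ is a minimizer of pLGopt; specifically $y_*=-\frac{\gamma^2}{g_0^{\top}w_*}(H-\lambda_*I)w_*$ if $g_0^{\top}w_*\ne0$, and $y_*=x_*+\sqrt{\gamma^2-\|x_*\|^2}\,\frac{w_*}{\|w_*\|}$ if $g_0^{\top}w_*=0$, where in the latter case $x_*=-(H-\lambda_*I)^{\dagger}g_0$, and it is guaranteed that $\|x_*\|\le\gamma$.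
   Context: pLGopt: minimize $\lambda$ over pairs $(\lambda,y)\in\mathbb{R}\times\mathbb{R}^\ell$ with $(H-\lambda I)y=-g_0$ and $\|y\|=\gamma$. pQEPmin: minimize $\lambda$ over pairs $(\lambda,w)$ with $\lambda\in\mathbb{R}$, $0\ne w\in\mathbb{R}^\ell$ and $(H-\lambda I)^2w=\gamma^{-2}g_0g_0^{\top}w$. $\lambda_{\min}(H)$ is the smallest eigenvalue of $H$; $X^\dagger$ is the Moore–Penrose inverse; norms are Euclidean. *)

theory Defs
  imports "HOL-Analysis.Analysis"
begin

definition eigenvalue :: "real^'n^'n \<Rightarrow> real \<Rightarrow> bool" where
  "eigenvalue H \<mu> \<longleftrightarrow> (\<exists>v. v \<noteq> 0 \<and> H *v v = \<mu> *\<^sub>R v)"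

definition lambda_min :: "real^'n^'n \<Rightarrow> real" where
  "lambda_min H = Min {\<mu>. eigenvalue H \<mu>}"

definition pinv :: "real^'n^'n \<Rightarrow> real^'n^'n" where
  "pinv A = (THE X. A ** X ** A = A \<and> X ** A ** X = X \<and>
                    transpose (A ** X) = A ** X \<and> transpose (X ** A) = X ** A)"

definition outer :: "real^'n \<Rightarrow> real^'n \<Rightarrow> real^'n^'n" where
  "outer u v = (\<chi> i j. u $ i * v $ j)"

definition LG_feasible :: "real^'n^'n \<Rightarrow> real^'n \<Rightarrow> real \<Rightarrow> real \<Rightarrow> real^'n \<Rightarrow> bool" where
  "LG_feasible H g0 \<gamma> lam y \<longleftrightarrow> (H - lam *\<^sub>R mat 1) *v y = - g0 \<and> norm y = \<gamma>"

definition LG_minimizer :: "real^'n^'n \<Rightarrow> real^'n \<Rightarrow> real \<Rightarrow> real \<Rightarrow> real^'n \<Rightarrow> bool" where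
  "LG_minimizer H g0 \<gamma> lam y \<longleftrightarrow> LG_feasible H g0 \<gamma> lam y \<and>
     (\<forall>\<mu> z. LG_feasible H g0 \<gamma> \<mu> z \<longrightarrow> lam \<le> \<mu>)"

definition QEP_feasible :: "real^'n^'n \<Rightarrow> real^'n \<Rightarrow> real \<Rightarrow> real \<Rightarrow> real^'n \<Rightarrow> bool" where
  "QEP_feasible H g0 \<gamma> lam w \<longleftrightarrow> w \<noteq> 0 \<and>
     ((H - lam *\<^sub>R mat 1) ** (H - lam *\<^sub>R mat 1)) *v w = (inverse (\<gamma>\<^sup>2) *\<^sub>R outer g0 g0) *v w"

definition QEP_minimizer :: "real^'n^'n \<Rightarrow> real^'n \<Rightarrow> real \<Rightarrow> real \<Rightarrow> real^'n \<Rightarrow> bool" where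
  "QEP_minimizer H g0 \<gamma> lam w \<longleftrightarrow> QEP_feasible H g0 \<gamma> lam w \<and>
     (\<forall>\<mu> z. QEP_feasible H g0 \<gamma> \<mu> z \<longrightarrow> lam \<le> \<mu>)"

end

theory Submission
  imports Defs
begin

lemma sym_inner:
  fixes A :: "real^'n^'n"
  assumes "transpose A = A"
  shows "x \<bullet> (A *v y) = (A *v x) \<bullet> y"
proof -
  have "x v* A = A *v x" using vector_transpose_matrix[of x A] assms by simp
  then show ?thesis by (metis dot_lmul_matrix)
qed

lemma shift_mv:
  fixes H :: "real^'n^'n"
  shows "(H - l *\<^sub>R mat 1) *v x = H *v x - l *\<^sub>R x"
  by (simp add: matrix_vector_mult_diff_rdistrib flip: scaleR_matrix_vector_assoc)

lemma shift_sym: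
  fixes H :: "real^'n^'n"
  assumes "transpose H = H"
  shows "transpose (H - l *\<^sub>R mat 1) = H - l *\<^sub>R mat 1"
  using assms by (simp add: transpose_def vec_eq_iff mat_def)

lemma outer_mv: "outer u v *v w = (v \<bullet> w) *\<^sub>R u"
  by (simp add: outer_def matrix_vector_mult_def vec_eq_iff inner_vec_def sum_distrib_left mult.commute mult.left_commute)

lemma sq_zero:
  fixes A :: "real^'n^'n"
  assumes "transpose A = A" "(A ** A) *v z = 0"
  shows "A *v z = 0"
proof -
  have "(A *v z) \<bullet> (A *v z) = z \<bullet> (A *v (A *v z))" using sym_inner[OF assms(1)] by metis
  also have "\<dots> = 0" using assms(2) by (simp add: matrix_vector_mul_assoc)
  finally show ?thesis by simp
qed

lemma quad_expand:
  fixes B :: "real^'n^'n"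
  assumes "transpose B = B"
  shows "(v + t *\<^sub>R w) \<bullet> (B *v (v + t *\<^sub>R w)) = v \<bullet> (B *v v) + 2 * t * (w \<bullet> (B *v v)) + t^2 * (w \<bullet> (B *v w))"
proof -
  have "v \<bullet> (B *v w) = w \<bullet> (B *v v)" using sym_inner[OF assms, of v w] by (simp add: inner_commute)
  then show ?thesis
    by (simp add: matrix_vector_right_distrib matrix_vector_mult_scaleR inner_add_left inner_add_right algebra_simps power2_eq_square)
qed

lemma psd_zero:
  fixes B :: "real^'n^'n"
  assumes sym: "transpose B = B" and psd: "\<forall>u. 0 \<le> u \<bullet> (B *v u)" and z: "v \<bullet> (B *v v) = 0"
  shows "B *v v = 0"
proof -
  define w where "w = B *v v"
  define a where "a = w \<bullet> w"
  define c where "c = w \<bullet> (B *v w)"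
  define k where "k = \<bar>c\<bar> + 1"
  define t where "t = - a / k"
  have kpos: "k > 0" unfolding k_def by simp
  have ta: "a = - t * k" unfolding t_def using kpos by simp
  have "0 \<le> (v + t *\<^sub>R w) \<bullet> (B *v (v + t *\<^sub>R w))" using psd by blast
  also have "\<dots> = 2 * t * a + t^2 * c"
    using quad_expand[OF sym, of v t w] z unfolding a_def c_def w_def by simp
  finally have h: "0 \<le> 2 * t * a + t^2 * c" .
  have "t^2 * c \<le> t^2 * (k - 1)" unfolding k_def by (simp add: mult_left_mono)
  with h have "0 \<le> 2 * t * a + t^2 * (k - 1)" by linarith
  also have "\<dots> = - (t^2 * (k + 1))" unfolding ta by (simp add: algebra_simps power2_eq_square)
  finally have "t^2 * (k+1) \<le> 0" by simp
  moreover have "k + 1 > 0" using kpos by simp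
  ultimately have "t^2 \<le> 0" by (simp add: mult_le_0_iff)
  then have "t = 0" by simp
  then have "a = 0" using ta by simp
  then show ?thesis unfolding a_def w_def by simp
qed

lemma rayleigh:
  fixes H :: "real^'n^'n"
  assumes sym: "transpose H = H"
  obtains m v where "v \<noteq> 0" "H *v v = m *\<^sub>R v" "\<forall>u. m * (u \<bullet> u) \<le> u \<bullet> (H *v u)"
proof -
  define f where "f = (\<lambda>u::real^'n. u \<bullet> (H *v u))"
  have cont: "continuous_on (sphere 0 1) f" unfolding f_def
    by (intro continuous_on_inner continuous_on_id linear_continuous_on matrix_vector_mul_bounded_linear)
  have ne: "sphere (0::real^'n) 1 \<noteq> {}" by simp
  obtain v where v: "v \<in> sphere 0 1" and vmin: "\<forall>y\<in>sphere 0 1. f v \<le> f y"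
    using continuous_attains_inf[OF compact_sphere ne cont] by blast
  define m where "m = f v"
  have nv: "norm v = 1" using v by simp
  have vv: "v \<bullet> v = 1" using nv by (simp add: dot_square_norm)
  have ray: "m * (u \<bullet> u) \<le> u \<bullet> (H *v u)" for u
  proof (cases "u = 0")
    case True then show ?thesis by simp
  next
    case False
    define w where "w = inverse (norm u) *\<^sub>R u"
    have "w \<in> sphere 0 1" unfolding w_def using False by simp
    then have "m \<le> f w" using vmin unfolding m_def by blast
    also have "f w = inverse (norm u)^2 * f u" unfolding f_def w_def
      by (simp add: matrix_vector_mult_scaleR power2_eq_square)
    finally have "m \<le> inverse (norm u)^2 * f u" .
    then have "m * (norm u)^2 \<le> f u" using False
      by (simp add: field_simps power2_eq_square)
    then show ?thesis unfolding f_def by (simp add: dot_square_norm)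
  qed
  define B where "B = H - m *\<^sub>R mat 1"
  have symB: "transpose B = B" unfolding B_def by (rule shift_sym[OF sym])
  have Bq: "u \<bullet> (B *v u) = u \<bullet> (H *v u) - m * (u \<bullet> u)" for u
    unfolding B_def shift_mv by (simp add: inner_diff_right)
  have psd: "\<forall>u. 0 \<le> u \<bullet> (B *v u)" using ray Bq by simp
  have "v \<bullet> (B *v v) = 0" using Bq[of v] vv unfolding m_def f_def by simp
  then have "B *v v = 0" using psd_zero[OF symB psd] by blast
  then have "H *v v = m *\<^sub>R v" unfolding B_def shift_mv by simp
  moreover have "v \<noteq> 0" using nv by auto
  ultimately show ?thesis using that[of v m] ray by simp
qed

lemma eig_finite:
  fixes H :: "real^'n^'n"
  assumes sym: "transpose H = H"
  shows "finite {\<mu>. eigenvalue H \<mu>}"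
proof -
  define S where "S = {\<mu>. eigenvalue H \<mu>}"
  define ev where "ev \<mu> = (SOME v. v \<noteq> 0 \<and> H *v v = \<mu> *\<^sub>R v)" for \<mu>
  have evp: "ev \<mu> \<noteq> 0 \<and> H *v ev \<mu> = \<mu> *\<^sub>R ev \<mu>" if "\<mu> \<in> S" for \<mu>
  proof -
    have "\<exists>v. v \<noteq> 0 \<and> H *v v = \<mu> *\<^sub>R v" using that unfolding S_def eigenvalue_def by simp
    then show ?thesis unfolding ev_def by (rule someI_ex)
  qed
  have inj: "inj_on ev S"
  proof (rule inj_onI)
    fix \<mu> \<nu> assume a: "\<mu> \<in> S" "\<nu> \<in> S" "ev \<mu> = ev \<nu>"
    then have "\<mu> *\<^sub>R ev \<mu> = \<nu> *\<^sub>R ev \<mu>" using evp[of \<mu>] evp[of \<nu>] by metis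
    then show "\<mu> = \<nu>" using evp[OF a(1)] by simp
  qed
  have orth0: "ev \<mu> \<bullet> ev \<nu> = 0" if a: "\<mu> \<in> S" "\<nu> \<in> S" "ev \<mu> \<noteq> ev \<nu>" for \<mu> \<nu>
  proof -
    have ne: "\<mu> \<noteq> \<nu>" using a by auto
    have "\<mu> * (ev \<mu> \<bullet> ev \<nu>) = (H *v ev \<mu>) \<bullet> ev \<nu>" using evp[OF a(1)] by simp
    also have "\<dots> = ev \<mu> \<bullet> (H *v ev \<nu>)" using sym_inner[OF sym, of "ev \<mu>" "ev \<nu>"] by simp
    also have "\<dots> = \<nu> * (ev \<mu> \<bullet> ev \<nu>)" using evp[OF a(2)] by simp
    finally show "ev \<mu> \<bullet> ev \<nu> = 0" using ne by simp
  qed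
  have orth: "pairwise orthogonal (ev ` S)"
    unfolding pairwise_def orthogonal_def
  proof (intro ballI impI)
    fix x y assume xy: "x \<in> ev ` S" "y \<in> ev ` S" "x \<noteq> y"
    then obtain \<mu> \<nu> where "\<mu> \<in> S" "\<nu> \<in> S" "x = ev \<mu>" "y = ev \<nu>" by blast
    then show "x \<bullet> y = 0" using orth0 xy(3) by simp
  qed
  have "0 \<notin> ev ` S"
  proof
    assume "0 \<in> ev ` S"
    then obtain \<mu> where "\<mu> \<in> S" "0 = ev \<mu>" by blast
    then show False using evp by metis
  qed
  then have "independent (ev ` S)" by (rule pairwise_orthogonal_independent[OF orth])
  then have "finite (ev ` S)" by (rule independent_imp_finite)
  then have "finite S" using inj by (rule finite_imageD)
  then show ?thesis unfolding S_def .
qed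

lemma eig_ge:
  fixes H :: "real^'n^'n"
  assumes ray: "\<forall>u. m * (u \<bullet> u) \<le> u \<bullet> (H *v u)" and e: "eigenvalue H \<mu>"
  shows "m \<le> \<mu>"
proof -
  obtain u where u: "u \<noteq> 0" "H *v u = \<mu> *\<^sub>R u" using e unfolding eigenvalue_def by blast
  have "m * (u \<bullet> u) \<le> u \<bullet> (H *v u)" using ray by blast
  also have "\<dots> = \<mu> * (u \<bullet> u)" using u(2) by simp
  finally have "m * (u \<bullet> u) \<le> \<mu> * (u \<bullet> u)" .
  moreover have "u \<bullet> u > 0" using u(1) by simp
  ultimately show ?thesis by (rule mult_right_le_imp_le)
qed

lemma lambda_min_eq:
  fixes H :: "real^'n^'n"
  assumes sym: "transpose H = H" and v: "v \<noteq> 0" "H *v v = m *\<^sub>R v"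
    and ray: "\<forall>u. m * (u \<bullet> u) \<le> u \<bullet> (H *v u)"
  shows "lambda_min H = m"
  unfolding lambda_min_def
proof (rule Min_eqI)
  show "finite {\<mu>. eigenvalue H \<mu>}" by (rule eig_finite[OF sym])
  show "\<And>y. y \<in> {\<mu>. eigenvalue H \<mu>} \<Longrightarrow> m \<le> y" using eig_ge[OF ray] by simp
  show "m \<in> {\<mu>. eigenvalue H \<mu>}" using v unfolding eigenvalue_def by blast
qed

lemma inner_expand2:
  fixes x y :: "real^'n"
  shows "(a *\<^sub>R x + b *\<^sub>R y) \<bullet> (a *\<^sub>R x + b *\<^sub>R y) = a^2 * (x \<bullet> x) + 2 * a * b * (x \<bullet> y) + b^2 * (y \<bullet> y)"
  by (simp add: inner_add_left inner_add_right inner_commute algebra_simps power2_eq_square)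

lemma trust_region:
  fixes H :: "real^'n^'n" and g0 :: "real^'n"
  assumes sym: "transpose H = H" and gam: "\<gamma> > 0"
    and ev: "v \<noteq> 0" "H *v v = m *\<^sub>R v"
  shows "\<exists>l x. LG_feasible H g0 \<gamma> l x \<and> l \<le> m"
proof -
  define q where "q = (\<lambda>u::real^'n. (1/2) * (u \<bullet> (H *v u)) + g0 \<bullet> u)"
  have cont: "continuous_on (sphere 0 \<gamma>) q" unfolding q_def
    by (intro continuous_intros continuous_on_inner continuous_on_id linear_continuous_on matrix_vector_mul_bounded_linear)
  have ne: "sphere (0::real^'n) \<gamma> \<noteq> {}" using gam by simp
  obtain x where xS: "x \<in> sphere 0 \<gamma>" and xmin: "\<forall>y\<in>sphere 0 \<gamma>. q x \<le> q y"
    using continuous_attains_inf[OF compact_sphere ne cont] by blast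
  have nx: "norm x = \<gamma>" using xS by simp
  have xx: "x \<bullet> x = \<gamma>^2" using nx by (metis power2_norm_eq_inner)
  have inS: "y \<in> sphere 0 \<gamma>" if "y \<bullet> y = \<gamma>^2" for y
  proof -
    have "norm y ^2 = \<gamma>^2" using that by (simp add: power2_norm_eq_inner)
    then have "norm y = \<gamma>" using gam by (simp add: power2_eq_iff_nonneg)
    then show ?thesis by simp
  qed
  define r where "r = H *v x + g0"
  have first: "r \<bullet> w = 0" if wx: "w \<bullet> x = 0" for w
  proof (cases "w = 0")
    case True then show ?thesis by simp
  next
    case False
    define c where "c = \<gamma> / norm w"
    have cpos: "c \<noteq> 0" using False gam unfolding c_def by simp
    define v' where "v' = c *\<^sub>R w"
    have vv: "v' \<bullet> v' = \<gamma>^2" unfolding v'_def c_def using False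
      by (simp add: power2_norm_eq_inner[symmetric] power_divide)
    have xv: "x \<bullet> v' = 0" unfolding v'_def using wx by (simp add: inner_commute)
    define a where "a = x \<bullet> (H *v x)"
    define b where "b = x \<bullet> (H *v v')"
    define e where "e = v' \<bullet> (H *v v')"
    define gx where "gx = g0 \<bullet> x"
    define gv where "gv = g0 \<bullet> v'"
    define F where "F t = (1/2)*((cos t)^2 * a + 2 * cos t * sin t * b + (sin t)^2 * e) + cos t * gx + sin t * gv" for t
    have vHx: "v' \<bullet> (H *v x) = b" unfolding b_def using sym_inner[OF sym, of v' x] sym_inner[OF sym, of x v']
      by (simp add: inner_commute)
    have Fq: "F t = q (cos t *\<^sub>R x + sin t *\<^sub>R v')" for t
      unfolding F_def q_def a_def e_def gx_def gv_def using vHx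
      by (simp add: b_def[symmetric] matrix_vector_right_distrib matrix_vector_mult_scaleR inner_add_left inner_add_right algebra_simps power2_eq_square)
    have onS: "cos t *\<^sub>R x + sin t *\<^sub>R v' \<in> sphere 0 \<gamma>" for t
    proof (rule inS)
      have "(cos t *\<^sub>R x + sin t *\<^sub>R v') \<bullet> (cos t *\<^sub>R x + sin t *\<^sub>R v') = (cos t)^2 * \<gamma>^2 + (sin t)^2 * \<gamma>^2"
        unfolding inner_expand2 xx vv xv by simp
      also have "\<dots> = ((cos t)^2 + (sin t)^2) * \<gamma>^2" by (simp only: distrib_right)
      also have "\<dots> = \<gamma>^2" by (simp only: sin_cos_squared_add2 mult_1)
      finally show "(cos t *\<^sub>R x + sin t *\<^sub>R v') \<bullet> (cos t *\<^sub>R x + sin t *\<^sub>R v') = \<gamma>^2" .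
    qed
    have F0: "F 0 = q x" using Fq[of 0] by simp
    have Fmin: "\<forall>t. \<bar>0 - t\<bar> < 1 \<longrightarrow> F 0 \<le> F t" using xmin onS Fq F0 by metis
    have der: "DERIV F 0 :> (b + gv)" unfolding F_def
      by (rule derivative_eq_intros refl | simp)+
    have "b + gv = 0" by (rule DERIV_local_min[OF der _ Fmin]) simp
    moreover have "r \<bullet> v' = b + gv" unfolding r_def b_def gv_def
      using sym_inner[OF sym, of x v'] by (metis inner_add_left inner_commute)
    ultimately have "r \<bullet> v' = 0" by simp
    then show ?thesis unfolding v'_def using cpos by simp
  qed
  define l where "l = (r \<bullet> x) / \<gamma>^2"
  define d where "d = r - l *\<^sub>R x"
  have dx: "d \<bullet> x = 0" unfolding d_def l_def using gam by (simp add: inner_diff_left xx)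
  have "d \<bullet> d = r \<bullet> d - l * (x \<bullet> d)" unfolding d_def by (simp add: inner_diff_left)
  also have "\<dots> = 0" using first[OF dx] dx by (simp add: inner_commute)
  finally have "d = 0" by simp
  then have rl: "r = l *\<^sub>R x" unfolding d_def by simp
  have feas: "LG_feasible H g0 \<gamma> l x"
    unfolding LG_feasible_def shift_mv using rl nx unfolding r_def
    by (metis add_diff_cancel_left' diff_add_cancel minus_diff_eq)
  have refl: "l * (d \<bullet> d) \<le> d \<bullet> (H *v d)" if dx: "d \<bullet> x \<noteq> 0" for d
  proof -
    have dd: "d \<bullet> d > 0" using dx by (metis inner_zero_left inner_gt_zero_iff)
    define s where "s = - 2 * (d \<bullet> x) / (d \<bullet> d)"
    have sdd: "s * (d \<bullet> d) = - 2 * (d \<bullet> x)" unfolding s_def using dd by simp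
    have s0: "s \<noteq> 0" unfolding s_def using dx dd by simp
    have "(x + s *\<^sub>R d) \<bullet> (x + s *\<^sub>R d) = x \<bullet> x + s * (2 * (d \<bullet> x) + s * (d \<bullet> d))"
      by (simp add: inner_add_left inner_add_right inner_commute algebra_simps power2_eq_square)
    also have "\<dots> = \<gamma>^2" using sdd xx by (simp add: algebra_simps)
    finally have "x + s *\<^sub>R d \<in> sphere 0 \<gamma>" by (rule inS)
    then have le: "q x \<le> q (x + s *\<^sub>R d)" using xmin by blast
    have dHx: "d \<bullet> (H *v x) = x \<bullet> (H *v d)" using sym_inner[OF sym, of d x] by (simp add: inner_commute)
    have "q (x + s *\<^sub>R d) = q x + s * (r \<bullet> d) + (1/2) * s^2 * (d \<bullet> (H *v d))"
      unfolding q_def r_def using quad_expand[OF sym, of x s d] dHx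
      by (simp add: inner_add_left inner_add_right inner_commute algebra_simps)
    moreover have "s * (r \<bullet> d) = - (1/2) * s^2 * l * (d \<bullet> d)"
    proof -
      have "s * (r \<bullet> d) = l * (s * (d \<bullet> x))" unfolding rl by (simp add: inner_commute)
      also have "s * (d \<bullet> x) = - (1/2) * s * (s * (d \<bullet> d))" using sdd by simp
      finally show ?thesis by (simp add: power2_eq_square algebra_simps)
    qed
    ultimately have "0 \<le> (1/2) * s^2 * (d \<bullet> (H *v d) - l * (d \<bullet> d))" using le
      by (simp add: algebra_simps)
    moreover have "s^2 > 0" using s0 by simp
    ultimately show ?thesis by (simp add: zero_le_mult_iff)
  qed
  have "l \<le> m"
  proof (rule ccontr)
    assume "\<not> l \<le> m"
    then have lm: "m < l" by simp
    have vv: "v \<bullet> v > 0" using ev(1) by simp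
    have vHv: "v \<bullet> (H *v v) = m * (v \<bullet> v)" using ev(2) by simp
    show False
    proof (cases "v \<bullet> x = 0")
      case False
      have "l * (v \<bullet> v) \<le> m * (v \<bullet> v)" using refl[OF False] vHv by simp
      then show False using lm vv by simp
    next
      case True
      define K where "K = \<bar>x \<bullet> (H *v x) - l * \<gamma>^2\<bar> + 1"
      have Kpos: "K > 0" unfolding K_def by simp
      define \<delta> where "\<delta> = (l - m) * (v \<bullet> v)"
      have dpos: "\<delta> > 0" unfolding \<delta>_def using lm vv by simp
      define c where "c = sqrt (\<delta> / (2 * K))"
      have c2: "c^2 = \<delta> / (2 * K)" unfolding c_def using dpos Kpos by simp
      have cpos: "c > 0" unfolding c_def using dpos Kpos by simp
      have xHv: "x \<bullet> (H *v v) = 0" using ev(2) True by (simp add: inner_commute)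
      have "(v + c *\<^sub>R x) \<bullet> x \<noteq> 0" using True cpos xx gam by (simp add: inner_add_left)
      then have "l * ((v + c *\<^sub>R x) \<bullet> (v + c *\<^sub>R x)) \<le> (v + c *\<^sub>R x) \<bullet> (H *v (v + c *\<^sub>R x))"
        by (rule refl)
      also have "\<dots> = m * (v \<bullet> v) + c^2 * (x \<bullet> (H *v x))"
        using quad_expand[OF sym, of v c x] vHv xHv by simp
      finally have ineq: "l * ((v + c *\<^sub>R x) \<bullet> (v + c *\<^sub>R x)) \<le> m * (v \<bullet> v) + c^2 * (x \<bullet> (H *v x))" .
      have eq: "(v + c *\<^sub>R x) \<bullet> (v + c *\<^sub>R x) = v \<bullet> v + c^2 * \<gamma>^2"
        using True xx by (simp add: inner_add_left inner_add_right inner_commute power2_eq_square)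
      have "l * (v \<bullet> v + c^2 * \<gamma>^2) \<le> m * (v \<bullet> v) + c^2 * (x \<bullet> (H *v x))"
        using ineq unfolding eq .
      then have "\<delta> \<le> c^2 * (x \<bullet> (H *v x) - l * \<gamma>^2)" unfolding \<delta>_def by (simp add: algebra_simps)
      also have "\<dots> \<le> c^2 * K" unfolding K_def by (intro mult_left_mono) auto
      also have "\<dots> = \<delta> / 2" unfolding c2 using Kpos by simp
      finally show False using dpos by simp
    qed
  qed
  then show ?thesis using feas by blast
qed
lemma vec_eq_by_inner:
  fixes a b :: "real^'n"
  assumes "\<And>z. a \<bullet> z = b \<bullet> z"
  shows "a = b"
proof -
  have "(a - b) \<bullet> (a - b) = 0" using assms[of "a - b"] by (simp add: inner_diff_left)
  then show ?thesis by simp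
qed

lemma sym_from_inner:
  fixes K :: "real^'n^'n"
  assumes "\<And>y z. y \<bullet> (K *v z) = (K *v y) \<bullet> z"
  shows "transpose K = K"
proof -
  have "transpose K *v y = K *v y" for y
  proof (rule vec_eq_by_inner)
    fix z
    have "(transpose K *v y) \<bullet> z = y \<bullet> (K *v z)" by (simp add: dot_lmul_matrix)
    also have "\<dots> = (K *v y) \<bullet> z" by (rule assms)
    finally show "(transpose K *v y) \<bullet> z = (K *v y) \<bullet> z" .
  qed
  then show ?thesis by (simp add: matrix_eq)
qed

lemma kernel_proj:
  fixes A :: "real^'n^'n"
  assumes symA: "transpose A = A"
  obtains K where "\<And>y. A *v (K *v y) = 0" "\<And>y. K *v (A *v y) = 0"
    "\<And>y. K *v (K *v y) = K *v y" "transpose K = K" "\<And>z. A *v z = 0 \<Longrightarrow> K *v z = z"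
proof -
  define N where "N = {z. A *v z = 0}"
  have subN: "subspace N" unfolding N_def
    by (auto simp: subspace_def matrix_vector_right_distrib matrix_vector_mult_scaleR)
  obtain B where BN: "B \<subseteq> N" and orth: "pairwise orthogonal B"
    and n1: "\<And>x. x \<in> B \<Longrightarrow> norm x = 1" and indB: "independent B" and spB: "span B = N"
    using orthonormal_basis_subspace[OF subN] by metis
  have finB: "finite B" using indB by (rule independent_imp_finite)
  define f where "f y = (\<Sum>b\<in>B. (b \<bullet> y) *\<^sub>R b)" for y :: "real^'n"
  have linf: "linear f"
    by (rule linearI) (simp_all add: f_def inner_add_right scaleR_add_left sum.distrib scaleR_sum_right)
  have Kf: "matrix f *v y = f y" for y using matrix_vector_mul(2)[OF linf] by metis
  have bb: "b' \<bullet> b = (if b = b' then 1 else 0)" if "b \<in> B" "b' \<in> B" for b b'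
  proof (cases "b = b'")
    case True
    then show ?thesis using n1[OF that(1)] by (simp add: dot_square_norm)
  next
    case False
    then show ?thesis using orth that unfolding pairwise_def orthogonal_def by (auto simp: inner_commute)
  qed
  have bf: "b' \<bullet> f y = b' \<bullet> y" if "b' \<in> B" for b' y
  proof -
    have "b' \<bullet> f y = (\<Sum>b\<in>B. (b \<bullet> y) * (b' \<bullet> b))" unfolding f_def by (simp add: inner_sum_right)
    also have "\<dots> = (\<Sum>b\<in>B. (if b = b' then b \<bullet> y else 0))"
      by (rule sum.cong) (use bb that in auto)
    also have "\<dots> = b' \<bullet> y" using finB that by (simp add: sum.delta' inner_commute)
    finally show ?thesis .
  qed
  have P1: "f y \<in> N" for y
  proof -
    have "f y \<in> span B" unfolding f_def by (intro span_sum span_mul span_base)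
    then show ?thesis using spB by simp
  qed
  have P2: "(y - f y) \<bullet> z = 0" if "z \<in> N" for y z
  proof -
    have "orthogonal (y - f y) z"
    proof (rule orthogonal_to_span)
      show "z \<in> span B" using that spB by simp
      show "orthogonal (y - f y) b" if "b \<in> B" for b
        using bf[OF that, of y] unfolding orthogonal_def by (simp add: inner_diff_left inner_diff_right inner_commute)
    qed
    then show ?thesis unfolding orthogonal_def .
  qed
  have fid: "f z = z" if "z \<in> N" for z
  proof -
    have "z - f z \<in> N" using subN that P1 by (simp add: subspace_diff)
    then have "(z - f z) \<bullet> (z - f z) = 0" using P2 by blast
    then show ?thesis by simp
  qed
  have AN: "(A *v y) \<bullet> z = 0" if "z \<in> N" for y z
    using that sym_inner[OF symA, of y z] unfolding N_def by simp
  have K1: "A *v (matrix f *v y) = 0" for y using P1 unfolding Kf N_def by simp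
  have K2: "matrix f *v (A *v y) = 0" for y
  proof -
    have "f (A *v y) \<bullet> f (A *v y) = (A *v y) \<bullet> f (A *v y) - (A *v y - f (A *v y)) \<bullet> f (A *v y)"
      by (simp add: inner_diff_left)
    also have "\<dots> = 0" using AN[OF P1] P2[OF P1] by simp
    finally show ?thesis unfolding Kf by simp
  qed
  have K3: "matrix f *v (matrix f *v y) = matrix f *v y" for y unfolding Kf using fid[OF P1] .
  have K4: "transpose (matrix f) = matrix f"
  proof (rule sym_from_inner)
    fix y z
    have "y \<bullet> f z = f y \<bullet> f z" using P2[OF P1, of y z] by (simp add: inner_diff_left)
    also have "\<dots> = f y \<bullet> z" using P2[OF P1, of z y] by (simp add: inner_diff_left inner_diff_right inner_commute)
    finally show "y \<bullet> (matrix f *v z) = (matrix f *v y) \<bullet> z" unfolding Kf .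
  qed
  have K5: "matrix f *v z = z" if "A *v z = 0" for z using fid that unfolding Kf N_def by simp
  show ?thesis using that K1 K2 K3 K4 K5 by blast
qed


lemma mp_unique:
  fixes A X Y :: "real^'n^'n"
  assumes X1: "A ** X ** A = A" and X2: "X ** A ** X = X" and X3: "transpose (A ** X) = A ** X"
    and X4: "transpose (X ** A) = X ** A"
    and Y1: "A ** Y ** A = A" and Y2: "Y ** A ** Y = Y" and Y3: "transpose (A ** Y) = A ** Y"
    and Y4: "transpose (Y ** A) = Y ** A"
  shows "X = Y"
proof -
  have AX: "A ** X = A ** Y"
  proof -
    have "A ** X = transpose (A ** X)" using X3 by simp
    also have "\<dots> = transpose X ** transpose A" by (rule matrix_transpose_mul)
    also have "\<dots> = transpose X ** transpose (A ** Y ** A)" using Y1 by simp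
    also have "\<dots> = transpose X ** (transpose A ** transpose (A ** Y))" by (simp add: matrix_transpose_mul)
    also have "\<dots> = transpose (A ** X) ** transpose (A ** Y)" by (simp add: matrix_transpose_mul matrix_mul_assoc)
    also have "\<dots> = (A ** X) ** (A ** Y)" using X3 Y3 by simp
    also have "\<dots> = (A ** X ** A) ** Y" by (simp add: matrix_mul_assoc)
    also have "\<dots> = A ** Y" using X1 by simp
    finally show ?thesis .
  qed
  have XA: "X ** A = Y ** A"
  proof -
    have "X ** A = transpose (X ** A)" using X4 by simp
    also have "\<dots> = transpose A ** transpose X" by (rule matrix_transpose_mul)
    also have "\<dots> = transpose (A ** Y ** A) ** transpose X" using Y1 by simp
    also have "\<dots> = (transpose (Y ** A) ** transpose A) ** transpose X" by (simp add: matrix_transpose_mul matrix_mul_assoc)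
    also have "\<dots> = transpose (Y ** A) ** transpose (X ** A)" by (simp add: matrix_transpose_mul matrix_mul_assoc)
    also have "\<dots> = (Y ** A) ** (X ** A)" using X4 Y4 by simp
    also have "\<dots> = Y ** (A ** X ** A)" by (simp add: matrix_mul_assoc)
    also have "\<dots> = Y ** A" using X1 by simp
    finally show ?thesis .
  qed
  have "X = X ** A ** X" using X2 by simp
  also have "\<dots> = X ** (A ** Y)" using AX by (simp add: matrix_mul_assoc[symmetric])
  also have "\<dots> = (Y ** A) ** Y" using XA by (simp add: matrix_mul_assoc)
  also have "\<dots> = Y" using Y2 by simp
  finally show ?thesis .
qed

lemma mp_exists:
  fixes A :: "real^'n^'n"
  assumes symA: "transpose A = A"
  shows "\<exists>X. A ** X ** A = A \<and> X ** A ** X = X \<and>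
                    transpose (A ** X) = A ** X \<and> transpose (X ** A) = X ** A"
proof -
  obtain K where K1: "\<And>y. A *v (K *v y) = 0" and K2: "\<And>y. K *v (A *v y) = 0"
    and K3: "\<And>y. K *v (K *v y) = K *v y" and K4: "transpose K = K"
    and K5: "\<And>z. A *v z = 0 \<Longrightarrow> K *v z = z"
    using kernel_proj[OF symA] by blast
  define M where "M = A + K"
  have Mv: "M *v y = A *v y + K *v y" for y unfolding M_def by (simp add: matrix_vector_mult_add_rdistrib)
  have "\<forall>z. M *v z = 0 \<longrightarrow> z = 0"
  proof (intro allI impI)
    fix z assume "M *v z = 0"
    then have h: "A *v z + K *v z = 0" using Mv by simp
    then have "K *v (A *v z + K *v z) = 0" by simp
    then have Kz: "K *v z = 0" using K2 K3 by (simp add: matrix_vector_right_distrib)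
    then have "A *v z = 0" using h by simp
    then have "K *v z = z" by (rule K5)
    then show "z = 0" using Kz by simp
  qed
  then obtain Mi where MiM: "Mi ** M = mat 1" using matrix_left_invertible_ker by blast
  then have MMi: "M ** Mi = mat 1" using matrix_left_right_inverse by blast
  have Mi1: "Mi *v (M *v y) = y" for y using MiM by (simp add: matrix_vector_mul_assoc)
  have Mi2: "M *v (Mi *v y) = y" for y using MMi by (simp add: matrix_vector_mul_assoc)
  have KM: "K *v (M *v u) = K *v u" for u using K2 K3 Mv by (simp add: matrix_vector_right_distrib)
  have KMi: "K *v (Mi *v w) = K *v w" for w using KM[of "Mi *v w"] Mi2 by simp
  have MiK: "Mi *v (K *v w) = K *v w" for w
  proof -
    have "M *v (K *v w) = K *v w" using Mv K1 K3 by simp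
    then show ?thesis using Mi1[of "K *v w"] by simp
  qed
  define X where "X = Mi - K"
  have Xv: "X *v y = Mi *v y - K *v y" for y unfolding X_def by (simp add: matrix_vector_mult_diff_rdistrib)
  have AX: "A *v (X *v y) = y - K *v y" for y
  proof -
    have "A *v (X *v y) = A *v (Mi *v y)" using K1 by (simp add: Xv matrix_vector_mult_diff_distrib)
    also have "\<dots> = M *v (Mi *v y) - K *v (Mi *v y)" using Mv by simp
    also have "\<dots> = y - K *v y" using Mi2 KMi by simp
    finally show ?thesis .
  qed
  have XA: "X *v (A *v y) = y - K *v y" for y
  proof -
    have "X *v (A *v y) = Mi *v (A *v y)" using K2 by (simp add: Xv)
    also have "\<dots> = Mi *v (M *v y - K *v y)" using Mv by simp
    also have "\<dots> = y - K *v y" using Mi1 MiK by (simp add: matrix_vector_mult_diff_distrib)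
    finally show ?thesis .
  qed
  have KX: "K *v (X *v y) = 0" for y using KMi K3 by (simp add: Xv matrix_vector_mult_diff_distrib)
  have sym1: "transpose (mat 1 - K) = mat 1 - K"
  proof (rule sym_from_inner)
    fix y z
    show "y \<bullet> ((mat 1 - K) *v z) = ((mat 1 - K) *v y) \<bullet> z"
      using sym_inner[OF K4, of y z] by (simp add: matrix_vector_mult_diff_rdistrib inner_diff_left inner_diff_right)
  qed
  have e1: "A ** X ** A = A" unfolding matrix_eq
    using AX K2 by (simp add: matrix_vector_mul_assoc[symmetric])
  have e2: "X ** A ** X = X" unfolding matrix_eq
    using XA KX by (simp add: matrix_vector_mul_assoc[symmetric])
  have e3: "A ** X = mat 1 - K" unfolding matrix_eq
    using AX by (simp add: matrix_vector_mul_assoc[symmetric] matrix_vector_mult_diff_rdistrib)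
  have e4: "X ** A = mat 1 - K" unfolding matrix_eq
    using XA by (simp add: matrix_vector_mul_assoc[symmetric] matrix_vector_mult_diff_rdistrib)
  show ?thesis using e1 e2 e3 e4 sym1 by metis
qed

lemma pinv_props:
  fixes A :: "real^'n^'n"
  assumes symA: "transpose A = A"
  shows "A ** pinv A ** A = A \<and> pinv A ** A ** pinv A = pinv A \<and>
         transpose (A ** pinv A) = A ** pinv A \<and> transpose (pinv A ** A) = pinv A ** A"
proof -
  have "\<exists>!X. A ** X ** A = A \<and> X ** A ** X = X \<and>
                    transpose (A ** X) = A ** X \<and> transpose (X ** A) = X ** A"
    using mp_exists[OF symA] mp_unique by blast
  then show ?thesis unfolding pinv_def by (rule theI')
qed

lemma mv_neg:
  fixes A :: "real^'n^'n"
  shows "A *v (- x) = - (A *v x)"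
  by (simp add: matrix_vector_mult_def vec_eq_iff sum_negf)

lemma qep_rhs: "(inverse (\<gamma>^2) *\<^sub>R outer g0 g0) *v w = (inverse (\<gamma>^2) * (g0 \<bullet> w)) *\<^sub>R g0"
  by (simp add: scaleR_matrix_vector_assoc[symmetric] outer_mv)

lemma LG_kernel:
  fixes H :: "real^'n^'n"
  assumes sym: "transpose H = H" and f: "LG_feasible H g0 \<gamma> \<mu> y"
    and z: "(H - \<mu> *\<^sub>R mat 1) *v z = 0"
  shows "g0 \<bullet> z = 0"
proof -
  have Ay: "(H - \<mu> *\<^sub>R mat 1) *v y = - g0" using f unfolding LG_feasible_def by simp
  have "g0 \<bullet> z = - (((H - \<mu> *\<^sub>R mat 1) *v y) \<bullet> z)" using Ay by simp
  also have "\<dots> = - (y \<bullet> ((H - \<mu> *\<^sub>R mat 1) *v z))" using sym_inner[OF shift_sym[OF sym, of \<mu>], of y z] by simp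
  finally show ?thesis using z by simp
qed

lemma inv_facts:
  fixes A :: "real^'n^'n"
  assumes "invertible A"
  shows "A ** matrix_inv A = mat 1" "matrix_inv A ** A = mat 1"
proof -
  have "\<exists>A'. A ** A' = mat 1 \<and> A' ** A = mat 1" using assms unfolding invertible_def .
  then have "A ** matrix_inv A = mat 1 \<and> matrix_inv A ** A = mat 1" unfolding matrix_inv_def by (rule someI_ex)
  then show "A ** matrix_inv A = mat 1" "matrix_inv A ** A = mat 1" by auto
qed

lemma inj_invertible:
  fixes A :: "real^'n^'n"
  assumes "\<And>z. A *v z = 0 \<Longrightarrow> z = 0"
  shows "invertible A"
  using assms matrix_left_invertible_ker invertible_left_inverse by blast

lemma LG_to_QEP_inv:
  fixes H :: "real^'n^'n"
  assumes sym: "transpose H = H" and gam: "\<gamma> > 0" and f: "LG_feasible H g0 \<gamma> \<mu> y"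
    and inv: "invertible (H - \<mu> *\<^sub>R mat 1)"
  shows "QEP_feasible H g0 \<gamma> \<mu> (matrix_inv (H - \<mu> *\<^sub>R mat 1) *v y)"
proof -
  define A where "A = H - \<mu> *\<^sub>R mat 1"
  define w where "w = matrix_inv A *v y"
  have symA: "transpose A = A" unfolding A_def by (rule shift_sym[OF sym])
  have Ay: "A *v y = - g0" and ny: "norm y = \<gamma>" using f unfolding LG_feasible_def A_def by auto
  have Aw: "A *v w = y" unfolding w_def using inv_facts(1)[OF inv[folded A_def]]
    by (simp add: matrix_vector_mul_assoc)
  have y0: "y \<noteq> 0" using ny gam by auto
  have w0: "w \<noteq> 0" using Aw y0 by auto
  have yy: "y \<bullet> y = \<gamma>^2" using ny by (metis power2_norm_eq_inner)
  have gw: "g0 \<bullet> w = - (\<gamma>^2)"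
  proof -
    have "g0 \<bullet> w = - ((A *v y) \<bullet> w)" using Ay by simp
    also have "\<dots> = - (y \<bullet> (A *v w))" using sym_inner[OF symA, of y w] by simp
    finally show ?thesis using Aw yy by simp
  qed
  have "((A ** A) *v w) = - g0" using Aw Ay by (simp add: matrix_vector_mul_assoc[symmetric])
  moreover have "(inverse (\<gamma>^2) *\<^sub>R outer g0 g0) *v w = - g0" using gw gam by (simp add: qep_rhs)
  ultimately show ?thesis unfolding QEP_feasible_def A_def[symmetric] w_def[symmetric] using w0 by simp
qed

lemma LG_to_QEP:
  fixes H :: "real^'n^'n"
  assumes sym: "transpose H = H" and gam: "\<gamma> > 0" and f: "LG_feasible H g0 \<gamma> \<mu> y"
  shows "\<exists>w. QEP_feasible H g0 \<gamma> \<mu> w"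
proof (cases "\<exists>z. z \<noteq> 0 \<and> (H - \<mu> *\<^sub>R mat 1) *v z = 0")
  case True
  then obtain z where z: "z \<noteq> 0" "(H - \<mu> *\<^sub>R mat 1) *v z = 0" by blast
  have gz: "g0 \<bullet> z = 0" by (rule LG_kernel[OF sym f z(2)])
  have "((H - \<mu> *\<^sub>R mat 1) ** (H - \<mu> *\<^sub>R mat 1)) *v z = 0"
    using z(2) by (simp add: matrix_vector_mul_assoc[symmetric])
  then have "QEP_feasible H g0 \<gamma> \<mu> z" unfolding QEP_feasible_def using z(1) gz by (simp add: qep_rhs)
  then show ?thesis by blast
next
  case False
  then have "invertible (H - \<mu> *\<^sub>R mat 1)" by (intro inj_invertible) blast
  then show ?thesis using LG_to_QEP_inv[OF sym gam f] by blast
qed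

lemma QEP_split:
  fixes H :: "real^'n^'n"
  assumes sym: "transpose H = H" and gam: "\<gamma> > 0" and q: "QEP_feasible H g0 \<gamma> \<mu> z"
  shows "(g0 \<bullet> z \<noteq> 0 \<and> LG_feasible H g0 \<gamma> \<mu> (- (\<gamma>\<^sup>2 / (g0 \<bullet> z)) *\<^sub>R ((H - \<mu> *\<^sub>R mat 1) *v z)))
       \<or> (g0 \<bullet> z = 0 \<and> (H - \<mu> *\<^sub>R mat 1) *v z = 0 \<and> z \<noteq> 0)"
proof -
  define A where "A = H - \<mu> *\<^sub>R mat 1"
  have symA: "transpose A = A" unfolding A_def by (rule shift_sym[OF sym])
  have z0: "z \<noteq> 0" and eq: "A *v (A *v z) = (inverse (\<gamma>^2) * (g0 \<bullet> z)) *\<^sub>R g0"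
    using q unfolding QEP_feasible_def A_def[symmetric] by (auto simp: qep_rhs matrix_vector_mul_assoc)
  show ?thesis
  proof (cases "g0 \<bullet> z = 0")
    case True
    then have "(A ** A) *v z = 0" using eq by (simp add: matrix_vector_mul_assoc)
    then have "A *v z = 0" by (rule sq_zero[OF symA])
    then show ?thesis using True z0 unfolding A_def by simp
  next
    case False
    define c where "c = \<gamma>^2 / (g0 \<bullet> z)"
    define y where "y = - c *\<^sub>R (A *v z)"
    have Ay: "A *v y = - g0" unfolding y_def c_def using eq False gam
      by (simp add: matrix_vector_mult_scaleR mv_neg)
    have "y \<bullet> y = c^2 * ((A *v z) \<bullet> (A *v z))" unfolding y_def by (simp add: power2_eq_square)
    also have "(A *v z) \<bullet> (A *v z) = z \<bullet> (A *v (A *v z))" using sym_inner[OF symA, of z "A *v z"] by simp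
    also have "\<dots> = inverse (\<gamma>^2) * (g0 \<bullet> z)^2" unfolding eq by (simp add: inner_commute power2_eq_square)
    finally have "y \<bullet> y = \<gamma>^2" unfolding c_def using False gam by (simp add: power2_eq_square field_simps)
    then have "norm y = \<gamma>" using gam by (metis norm_eq_sqrt_inner real_sqrt_abs abs_of_pos)
    then have "LG_feasible H g0 \<gamma> \<mu> y" using Ay unfolding LG_feasible_def A_def by simp
    then show ?thesis using False unfolding y_def c_def A_def by simp
  qed
qed

lemma proj_norm_le:
  fixes Q :: "real^'n^'n"
  assumes symQ: "transpose Q = Q" and idem: "\<And>y. Q *v (Q *v y) = Q *v y"
  shows "norm (Q *v x) \<le> norm x"
proof -
  have o: "(Q *v x) \<bullet> (x - Q *v x) = 0"
    using sym_inner[OF symQ, of x "x - Q *v x"] idem[of x]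
    by (simp add: matrix_vector_mult_diff_distrib)
  have "x \<bullet> x = (Q *v x) \<bullet> (Q *v x) + (x - Q *v x) \<bullet> (x - Q *v x) + 2 * ((Q *v x) \<bullet> (x - Q *v x))"
    by (simp add: inner_diff_left inner_diff_right inner_commute)
  then have "(Q *v x) \<bullet> (Q *v x) \<le> x \<bullet> x" using o by simp
  then show ?thesis by (simp add: norm_eq_sqrt_inner)
qed

theorem theorem2p5:
  fixes H :: "real^'n^'n" and g0 :: "real^'n" and \<gamma> :: real
  assumes symH: "transpose H = H"
    and g0: "g0 \<noteq> 0"
    and gam: "\<gamma> > 0"
  shows
    "(\<forall>lam_s ys. LG_minimizer H g0 \<gamma> lam_s ys \<longrightarrow>
        (lam_s < lambda_min H \<or> lam_s = lambda_min H) \<and>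
        (\<exists>ws. QEP_minimizer H g0 \<gamma> lam_s ws) \<and>
        (lam_s < lambda_min H \<longrightarrow>
           QEP_minimizer H g0 \<gamma> lam_s (matrix_inv (H - lam_s *\<^sub>R mat 1) *v ys)) \<and>
        (lam_s = lambda_min H \<longrightarrow>
           (\<exists>ws. ws \<noteq> 0 \<and> H *v ws = lam_s *\<^sub>R ws \<and> QEP_minimizer H g0 \<gamma> lam_s ws)))
   \<and>
    (\<forall>lam_s ws. QEP_minimizer H g0 \<gamma> lam_s ws \<longrightarrow>
        (\<exists>ys. LG_minimizer H g0 \<gamma> lam_s ys) \<and>
        (g0 \<bullet> ws \<noteq> 0 \<longrightarrow>
           LG_minimizer H g0 \<gamma> lam_s (- (\<gamma>\<^sup>2 / (g0 \<bullet> ws)) *\<^sub>R ((H - lam_s *\<^sub>R mat 1) *v ws))) \<and>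
        (g0 \<bullet> ws = 0 \<longrightarrow>
           (let xs = - (pinv (H - lam_s *\<^sub>R mat 1) *v g0) in
              norm xs \<le> \<gamma> \<and>
              LG_minimizer H g0 \<gamma> lam_s
                (xs + sqrt (\<gamma>\<^sup>2 - (norm xs)\<^sup>2) *\<^sub>R (inverse (norm ws) *\<^sub>R ws)))))"
proof -
  obtain m v where v0: "v \<noteq> 0" and Hv: "H *v v = m *\<^sub>R v" and ray: "\<forall>u. m * (u \<bullet> u) \<le> u \<bullet> (H *v u)"
    using rayleigh[OF symH] by blast
  have lm: "lambda_min H = m" by (rule lambda_min_eq[OF symH v0 Hv ray])
  obtain l0 x0 where f0: "LG_feasible H g0 \<gamma> l0 x0" and l0m: "l0 \<le> m"
    using trust_region[OF symH gam v0 Hv, of g0] by blast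
  have eigA: "m \<le> \<mu>" if "z \<noteq> 0" "(H - \<mu> *\<^sub>R mat 1) *v z = 0" for \<mu> z
  proof -
    have "H *v z = \<mu> *\<^sub>R z" using that(2) unfolding shift_mv by simp
    then have "eigenvalue H \<mu>" using that(1) unfolding eigenvalue_def by blast
    then show ?thesis by (rule eig_ge[OF ray])
  qed
  have part1: "(lam_s < lambda_min H \<or> lam_s = lambda_min H) \<and>
        (\<exists>ws. QEP_minimizer H g0 \<gamma> lam_s ws) \<and>
        (lam_s < lambda_min H \<longrightarrow>
           QEP_minimizer H g0 \<gamma> lam_s (matrix_inv (H - lam_s *\<^sub>R mat 1) *v ys)) \<and>
        (lam_s = lambda_min H \<longrightarrow>
           (\<exists>ws. ws \<noteq> 0 \<and> H *v ws = lam_s *\<^sub>R ws \<and> QEP_minimizer H g0 \<gamma> lam_s ws))"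
    if lgm: "LG_minimizer H g0 \<gamma> lam_s ys" for lam_s ys
  proof -
    have fs: "LG_feasible H g0 \<gamma> lam_s ys" and mins: "\<And>\<mu> z. LG_feasible H g0 \<gamma> \<mu> z \<Longrightarrow> lam_s \<le> \<mu>"
      using lgm unfolding LG_minimizer_def by auto
    have le: "lam_s \<le> m" using mins[OF f0] l0m by simp
    have qmin: "lam_s \<le> \<mu>" if "QEP_feasible H g0 \<gamma> \<mu> z" for \<mu> z
      using QEP_split[OF symH gam that] mins eigA le by fastforce
    have c: "QEP_minimizer H g0 \<gamma> lam_s (matrix_inv (H - lam_s *\<^sub>R mat 1) *v ys)" if lt: "lam_s < m"
    proof -
      have "invertible (H - lam_s *\<^sub>R mat 1)"
      proof (rule inj_invertible)
        fix z assume "(H - lam_s *\<^sub>R mat 1) *v z = 0"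
        then show "z = 0" using eigA[of z lam_s] lt by force
      qed
      then show ?thesis unfolding QEP_minimizer_def using LG_to_QEP_inv[OF symH gam fs] qmin by blast
    qed
    have d: "v \<noteq> 0 \<and> H *v v = lam_s *\<^sub>R v \<and> QEP_minimizer H g0 \<gamma> lam_s v" if eq: "lam_s = m"
    proof -
      have Av: "(H - lam_s *\<^sub>R mat 1) *v v = 0" using Hv eq unfolding shift_mv by simp
      have gv: "g0 \<bullet> v = 0" by (rule LG_kernel[OF symH fs Av])
      have "((H - lam_s *\<^sub>R mat 1) ** (H - lam_s *\<^sub>R mat 1)) *v v = 0"
        using Av by (simp add: matrix_vector_mul_assoc[symmetric])
      then have "QEP_feasible H g0 \<gamma> lam_s v" unfolding QEP_feasible_def using v0 gv by (simp add: qep_rhs)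
      then show ?thesis using v0 Hv eq qmin unfolding QEP_minimizer_def by blast
    qed
    show ?thesis unfolding lm using le c d by (metis order_le_less)
  qed
  have part2: "(\<exists>ys. LG_minimizer H g0 \<gamma> lam_s ys) \<and>
        (g0 \<bullet> ws \<noteq> 0 \<longrightarrow>
           LG_minimizer H g0 \<gamma> lam_s (- (\<gamma>\<^sup>2 / (g0 \<bullet> ws)) *\<^sub>R ((H - lam_s *\<^sub>R mat 1) *v ws))) \<and>
        (g0 \<bullet> ws = 0 \<longrightarrow>
           (let xs = - (pinv (H - lam_s *\<^sub>R mat 1) *v g0) in
              norm xs \<le> \<gamma> \<and>
              LG_minimizer H g0 \<gamma> lam_s
                (xs + sqrt (\<gamma>\<^sup>2 - (norm xs)\<^sup>2) *\<^sub>R (inverse (norm ws) *\<^sub>R ws))))"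
    if qm: "QEP_minimizer H g0 \<gamma> lam_s ws" for lam_s ws
  proof -
    have qf: "QEP_feasible H g0 \<gamma> lam_s ws" and qmins: "\<And>\<mu> z. QEP_feasible H g0 \<gamma> \<mu> z \<Longrightarrow> lam_s \<le> \<mu>"
      using qm unfolding QEP_minimizer_def by auto
    have lgmin: "lam_s \<le> \<mu>" if "LG_feasible H g0 \<gamma> \<mu> y" for \<mu> y
      using LG_to_QEP[OF symH gam that] qmins by blast
    have lgm_of: "LG_minimizer H g0 \<gamma> lam_s y" if "LG_feasible H g0 \<gamma> lam_s y" for y
      unfolding LG_minimizer_def using that lgmin by blast
    have ll0: "lam_s \<le> l0" by (rule lgmin[OF f0])
    show ?thesis
    proof (cases "g0 \<bullet> ws = 0")
      case False
      then have "LG_feasible H g0 \<gamma> lam_s (- (\<gamma>\<^sup>2 / (g0 \<bullet> ws)) *\<^sub>R ((H - lam_s *\<^sub>R mat 1) *v ws))"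
        using QEP_split[OF symH gam qf] by blast
      then show ?thesis using lgm_of False by blast
    next
      case True
      define A where "A = H - lam_s *\<^sub>R mat 1"
      have symA: "transpose A = A" unfolding A_def by (rule shift_sym[OF symH])
      have Aws: "A *v ws = 0" and ws0: "ws \<noteq> 0" using QEP_split[OF symH gam qf] True unfolding A_def by auto
      have "m \<le> lam_s" using eigA[OF ws0 Aws[unfolded A_def]] .
      then have "lam_s = l0" using ll0 l0m by simp
      then have fl: "LG_feasible H g0 \<gamma> lam_s x0" using f0 by simp
      have Ax0: "A *v x0 = - g0" and nx0: "norm x0 = \<gamma>" using fl unfolding LG_feasible_def A_def by auto
      define P where "P = pinv A"
      have P1: "A ** P ** A = A" and P4: "transpose (P ** A) = P ** A"
        using pinv_props[OF symA] unfolding P_def by auto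
      define Q where "Q = P ** A"
      have idem: "Q *v (Q *v y) = Q *v y" for y
      proof -
        have "Q ** Q = P ** (A ** P ** A)" unfolding Q_def by (simp add: matrix_mul_assoc)
        then have "Q ** Q = Q" using P1 unfolding Q_def by simp
        then show ?thesis by (simp add: matrix_vector_mul_assoc)
      qed
      define xs where "xs = - (P *v g0)"
      have xsQ: "xs = Q *v x0" unfolding xs_def Q_def using Ax0
        by (simp add: matrix_vector_mul_assoc[symmetric] mv_neg)
      have nxs: "norm xs \<le> \<gamma>" unfolding xsQ using proj_norm_le[OF P4[folded Q_def] idem, of x0] nx0 by linarith
      have Axs: "A *v xs = - g0"
      proof -
        have "A *v xs = (A ** P ** A) *v x0" unfolding xsQ Q_def by (simp add: matrix_vector_mul_assoc matrix_mul_assoc)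
        then show ?thesis using P1 Ax0 by simp
      qed
      define u where "u = inverse (norm ws) *\<^sub>R ws"
      have uu: "u \<bullet> u = 1" unfolding u_def using ws0
        by (simp add: power2_norm_eq_inner[symmetric] power2_eq_square)
      have Au: "A *v u = 0" unfolding u_def using Aws by (simp add: matrix_vector_mult_scaleR)
      have xu: "xs \<bullet> u = 0"
      proof -
        have "xs \<bullet> u = x0 \<bullet> (Q *v u)" unfolding xsQ using sym_inner[OF P4[folded Q_def], of x0 u] by simp
        also have "Q *v u = 0" unfolding Q_def using Au by (simp add: matrix_vector_mul_assoc[symmetric])
        finally show ?thesis by simp
      qed
      define s where "s = sqrt (\<gamma>\<^sup>2 - (norm xs)\<^sup>2)"
      have s2: "s^2 = \<gamma>\<^sup>2 - (norm xs)\<^sup>2" unfolding s_def using nxs norm_ge_zero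
        by (simp add: power_mono)
      define y where "y = xs + s *\<^sub>R u"
      have Ay: "A *v y = - g0" unfolding y_def using Axs Au
        by (simp add: matrix_vector_right_distrib matrix_vector_mult_scaleR)
      have "y \<bullet> y = xs \<bullet> xs + s^2" unfolding y_def using xu uu
        by (simp add: inner_add_left inner_add_right inner_commute power2_eq_square)
      also have "\<dots> = \<gamma>^2" using s2 by (simp add: power2_norm_eq_inner)
      finally have "norm y = \<gamma>" using gam by (metis norm_eq_sqrt_inner real_sqrt_abs abs_of_pos)
      then have "LG_feasible H g0 \<gamma> lam_s y" unfolding LG_feasible_def using Ay unfolding A_def by simp
      then have "LG_minimizer H g0 \<gamma> lam_s y" by (rule lgm_of)
      then show ?thesis using True nxs fl lgm_of
        unfolding Let_def y_def u_def s_def xs_def P_def A_def by blast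
    qed
  qed
  show ?thesis using part1 part2 by blast
qed

end
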